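(* Let $\bm{Z}=(Z_1,\ldots,Z_n)^T\in\{0,1\}^n$ with both treatment groups nonempty, and let $\bm{X}\in\mathbb{R}^{n\times p}$ be a covariate matrix whose first column is the all-ones vector, with rows $\bm{X}_1,\ldots,\bm{X}_n$. Let $\bm{\Sigma}$ be a symmetric positive definite $n\times n$ matrix with orthonormal eigenvectors $\bm{v}_1,\ldots,\bm{v}_n$ ($v_{ki}$ the $i$-th entry of $\bm{v}_k$) and eigenvalues $\lambda_1\ge\cdots\ge\lambda_n>0$. Assume $\bm{X}^T\bm{\Sigma}^{-1}\bm{X}$ is invertible and $\bm{Z}^T\bm{\Sigma}^{-1}(\bm{I}_n-\bm{X}(\bm{X}^T\bm{\Sigma}^{-1}\bm{X})^{-1}\bm{X}^T\bm{\Sigma}^{-1})\bm{Z}\neq0$. Then the solution of $$\min_{\bm{w}\in\mathbb{R}^n}\sum_{k=1}^n\lambda_k\Big(\sum_{i:Z_i=1}w_iv_{ki}-\sum_{i:Z_i=0}w_iv_{ki}\Big)^2$$ subject to $\sum_{i:Z_i=1}w_i=1$, $\sum_{i:Z_i=0}w_i=1$ and $\sum_{i:Z_i=1}w_i\bm{X}_i=\sum_{i:Z_i=0}w_i\bm{X}_i$ is $$\bm{w}=\bm{M}\,\frac{(\bm{I}_n-\bm{\Sigma}^{-1}\bm{X}(\bm{X}^T\bm{\Sigma}^{-1}\bm{X})^{-1}\bm{X}^T)\bm{\Sigma}^{-1}\bm{Z}}{\bm{Z}^T\bm{\Sigma}^{-1}(\bm{I}_n-\bm{X}(\bm{X}^T\bm{\Sigma}^{-1}\bm{X})^{-1}\bm{X}^T\bm{\Sigma}^{-1})\bm{Z}},$$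 with $\bm{M}$ diagonal, $M_{ii}=2Z_i-1$; i.e. the implied weights of the GLS estimator of the treatment coefficient.
   Context: The GLS estimator of $\tau$ in the model $\bm{Y}=\bm{X}\bm{\beta}+\tau\bm{Z}+\bm{\epsilon}$ with error covariance $\bm{\Sigma}$ is the last coordinate of $\big(\begin{pmatrix}\bm{X} & \bm{Z}\end{pmatrix}^T\bm{\Sigma}^{-1}\begin{pmatrix}\bm{X} & \bm{Z}\end{pmatrix}\big)^{-1}\begin{pmatrix}\bm{X} & \bm{Z}\end{pmatrix}^T\bm{\Sigma}^{-1}\bm{Y}$, and equals $\sum_{Z_i=1}w_iY_i-\sum_{Z_i=0}w_iY_i$ with $\bm{w}$ as displayed. *)

theory Defs
  imports "HOL-Analysis.Analysis"
begin

definition treated :: "real^'n \<Rightarrow> 'n set" where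
  "treated Z = {i. Z $ i = 1}"

definition control :: "real^'n \<Rightarrow> 'n set" where
  "control Z = {i. Z $ i = 0}"

definition weight_objective ::
  "('n::finite \<Rightarrow> real) \<Rightarrow> ('n \<Rightarrow> real^'n) \<Rightarrow> real^'n \<Rightarrow> real^'n \<Rightarrow> real" where
  "weight_objective lam v Z w =
     (\<Sum>k\<in>UNIV. lam k *
        ((\<Sum>i\<in>treated Z. w $ i * v k $ i) - (\<Sum>i\<in>control Z. w $ i * v k $ i))\<^sup>2)"

definition weight_feasible :: "real^'p^'n \<Rightarrow> real^'n \<Rightarrow> real^'n \<Rightarrow> bool" where
  "weight_feasible X Z w \<longleftrightarrow>
     (\<Sum>i\<in>treated Z. w $ i) = 1 \<and>
     (\<Sum>i\<in>control Z. w $ i) = 1 \<and>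
     (\<Sum>i\<in>treated Z. w $ i *\<^sub>R X $ i) = (\<Sum>i\<in>control Z. w $ i *\<^sub>R X $ i)"

definition gls_weights :: "real^'n^'n \<Rightarrow> real^'p^'n \<Rightarrow> real^'n \<Rightarrow> real^'n" where
  "gls_weights S X Z =
     (let Si = matrix_inv S;
          G = matrix_inv (transpose X ** Si ** X);
          u = (mat 1 - Si ** X ** G ** transpose X) *v (Si *v Z);
          d = Z \<bullet> (Si *v ((mat 1 - X ** G ** transpose X ** Si) *v Z))
      in (\<chi> i. (2 * Z $ i - 1) * u $ i / d))"

end

theory Submission imports Defs begin

definition flipv :: "real^'n \<Rightarrow> real^'n \<Rightarrow> real^'n" where
  "flipv Z w = (\<chi> i. (2 * Z $ i - 1) * w $ i)"

lemma inv_props: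
  fixes A :: "real^'n^'n"
  assumes "invertible A"
  shows "A ** matrix_inv A = mat 1 \<and> matrix_inv A ** A = mat 1"
  using assms unfolding invertible_def matrix_inv_def by (rule someI_ex)

lemma flip_flip:
  assumes Z01: "\<forall>i. Z $ i = 0 \<or> Z $ i = 1"
  shows "flipv Z (flipv Z w) = (w::real^'n)"
proof -
  have "(2 * Z $ i - 1) * ((2 * Z $ i - 1) * w $ i) = w $ i" for i
    using Z01[rule_format, of i] by auto
  then show ?thesis by (simp add: flipv_def vec_eq_iff)
qed

lemma flip_inj:
  assumes Z01: "\<forall>i. Z $ i = 0 \<or> Z $ i = 1"
  shows "flipv Z w = flipv Z w' \<longleftrightarrow> (w::real^'n) = w'"
  by (metis Z01 flip_flip)

lemma split_sum:
  fixes Z :: "real^'n"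
  assumes Z01: "\<forall>i. Z $ i = 0 \<or> Z $ i = 1"
  shows "(\<Sum>i\<in>UNIV. f i) = (\<Sum>i\<in>treated Z. f i) + (\<Sum>i\<in>control Z. f i)"
proof -
  have "UNIV = treated Z \<union> control Z" using Z01 by (auto simp: treated_def control_def)
  moreover have "treated Z \<inter> control Z = {}" by (auto simp: treated_def control_def)
  ultimately show ?thesis by (metis finite sum.union_disjoint)
qed

lemma split_m:
  fixes Z :: "real^'n"
  assumes Z01: "\<forall>i. Z $ i = 0 \<or> Z $ i = 1"
  shows "(\<Sum>i\<in>UNIV. (2 * Z $ i - 1) * f i) = (\<Sum>i\<in>treated Z. f i) - (\<Sum>i\<in>control Z. f i)"
proof -
  have "(\<Sum>i\<in>UNIV. (2 * Z $ i - 1) * f i) = (\<Sum>i\<in>treated Z. (2 * Z $ i - 1) * f i) + (\<Sum>i\<in>control Z. (2 * Z $ i - 1) * f i)"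
    by (rule split_sum[OF Z01])
  also have "\<dots> = (\<Sum>i\<in>treated Z. f i) + (\<Sum>i\<in>control Z. - f i)"
    by (intro arg_cong2[where f="(+)"] sum.cong) (auto simp: treated_def control_def)
  finally show ?thesis by (simp add: sum_negf)
qed

lemma split_Z:
  fixes Z :: "real^'n"
  assumes Z01: "\<forall>i. Z $ i = 0 \<or> Z $ i = 1"
  shows "(\<Sum>i\<in>UNIV. Z $ i * f i) = (\<Sum>i\<in>treated Z. f i)"
proof -
  have "(\<Sum>i\<in>UNIV. Z $ i * f i) = (\<Sum>i\<in>treated Z. Z $ i * f i) + (\<Sum>i\<in>control Z. Z $ i * f i)"
    by (rule split_sum[OF Z01])
  also have "\<dots> = (\<Sum>i\<in>treated Z. f i) + (\<Sum>i\<in>control Z. 0)"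
    by (intro arg_cong2[where f="(+)"] sum.cong) (auto simp: treated_def control_def)
  finally show ?thesis by simp
qed

lemma objective_flip:
  fixes Z :: "real^'n::finite"
  assumes Z01: "\<forall>i. Z $ i = 0 \<or> Z $ i = 1"
  shows "weight_objective lam v Z w = (\<Sum>k\<in>UNIV. lam k * (v k \<bullet> flipv Z w)\<^sup>2)"
proof -
  have "v k \<bullet> flipv Z w = (\<Sum>i\<in>treated Z. w $ i * v k $ i) - (\<Sum>i\<in>control Z. w $ i * v k $ i)" for k
    unfolding inner_vec_def flipv_def using split_m[OF Z01, of "\<lambda>i. w $ i * v k $ i"]
    by (simp add: mult_ac)
  then show ?thesis by (simp add: weight_objective_def)
qed

lemma spectral:
  fixes S :: "real^'n^'n" and v :: "'n \<Rightarrow> real^'n"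
  assumes v_orthonormal: "\<forall>k l. v k \<bullet> v l = (if k = l then 1 else 0)"
    and v_eigen: "\<forall>k. S *v v k = lam k *\<^sub>R v k"
  shows "y \<bullet> (S *v y) = (\<Sum>k\<in>UNIV. lam k * (v k \<bullet> y)\<^sup>2)"
proof -
  define V :: "real^'n^'n" where "V = (\<chi> k. v k)"
  have "V ** transpose V = mat 1"
    using v_orthonormal
    by (simp add: V_def matrix_matrix_mult_def mat_def vec_eq_iff transpose_def inner_vec_def mult.commute)
  then have VV: "transpose V ** V = mat 1" using matrix_left_right_inverse by blast
  define c where "c = V *v y"
  have c: "c $ k = v k \<bullet> y" for k
    by (simp add: c_def V_def matrix_vector_mult_def inner_vec_def mult.commute)
  have "y = transpose V *v c" unfolding c_def
    by (metis VV matrix_vector_mul_assoc matrix_vector_mul_lid)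
  also have "\<dots> = (\<Sum>k\<in>UNIV. c $ k *\<^sub>R v k)"
    by (simp add: vec_eq_iff vector_matrix_mult_def V_def sum_component mult.commute)
  finally have ye: "y = (\<Sum>k\<in>UNIV. c $ k *\<^sub>R v k)" .
  have "S *v y = (\<Sum>k\<in>UNIV. (c $ k * lam k) *\<^sub>R v k)"
    apply (subst ye)
    by (simp add: linear_sum[OF matrix_vector_mul_linear] o_def matrix_vector_mult_scaleR v_eigen)
  then have "y \<bullet> (S *v y) = (\<Sum>k\<in>UNIV. (c $ k * lam k) * (y \<bullet> v k))"
    by (simp add: inner_sum_right)
  then show ?thesis by (simp add: c inner_commute power2_eq_square mult_ac)
qed


lemma feasible_iff:
  fixes Z :: "real^'n::finite" and X :: "real^'p^'n"
  assumes Z01: "\<forall>i. Z $ i = 0 \<or> Z $ i = 1"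
    and icpt: "\<forall>i. X $ i $ j0 = 1"
  shows "weight_feasible X Z w \<longleftrightarrow> (Z \<bullet> flipv Z w = 1 \<and> transpose X *v flipv Z w = 0)"
proof -
  have e1: "Z \<bullet> flipv Z w = (\<Sum>i\<in>treated Z. w $ i)"
  proof -
    have "Z \<bullet> flipv Z w = (\<Sum>i\<in>UNIV. Z $ i * ((2 * Z $ i - 1) * w $ i))"
      by (simp add: inner_vec_def flipv_def)
    also have "\<dots> = (\<Sum>i\<in>treated Z. ((2 * Z $ i - 1) * w $ i))" by (rule split_Z[OF Z01])
    also have "\<dots> = (\<Sum>i\<in>treated Z. w $ i)" by (rule sum.cong) (auto simp: treated_def)
    finally show ?thesis .
  qed
  have e2: "(transpose X *v flipv Z w) $ j = (\<Sum>i\<in>treated Z. w $ i *\<^sub>R X $ i) $ j - (\<Sum>i\<in>control Z. w $ i *\<^sub>R X $ i) $ j" for j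
  proof -
    have "(transpose X *v flipv Z w) $ j = (\<Sum>i\<in>UNIV. (2 * Z $ i - 1) * (w $ i * X $ i $ j))"
      by (simp add: vector_matrix_mult_def flipv_def mult_ac)
    also have "\<dots> = (\<Sum>i\<in>treated Z. w $ i * X $ i $ j) - (\<Sum>i\<in>control Z. w $ i * X $ i $ j)"
      by (rule split_m[OF Z01])
    finally show ?thesis by (simp add: sum_component)
  qed
  have e3: "(\<Sum>i\<in>treated Z. w $ i *\<^sub>R X $ i) $ j0 = (\<Sum>i\<in>treated Z. w $ i)"
     "(\<Sum>i\<in>control Z. w $ i *\<^sub>R X $ i) $ j0 = (\<Sum>i\<in>control Z. w $ i)"
    by (simp_all add: sum_component icpt)
  show ?thesis
  proof
    assume "weight_feasible X Z w"
    then have f1: "(\<Sum>i\<in>treated Z. w $ i) = 1" and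
      f2: "(\<Sum>i\<in>treated Z. w $ i *\<^sub>R X $ i) = (\<Sum>i\<in>control Z. w $ i *\<^sub>R X $ i)"
      unfolding weight_feasible_def by auto
    have "(transpose X *v flipv Z w) $ j = 0 $ j" for j unfolding e2 f2 by simp
    then show "Z \<bullet> flipv Z w = 1 \<and> transpose X *v flipv Z w = 0"
      using e1 f1 by (simp only: vec_eq_iff) simp
  next
    assume a: "Z \<bullet> flipv Z w = 1 \<and> transpose X *v flipv Z w = 0"
    have c: "(transpose X *v flipv Z w) $ j = 0" for j using a by (metis zero_index)
    have b: "(\<Sum>i\<in>treated Z. w $ i *\<^sub>R X $ i) $ j = (\<Sum>i\<in>control Z. w $ i *\<^sub>R X $ i) $ j" for j
      using e2[of j] c[of j] by linarith
    have t1: "(\<Sum>i\<in>treated Z. w $ i) = 1" using a e1 by simp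
    show "weight_feasible X Z w"
      unfolding weight_feasible_def
    proof (intro conjI)
      show "(\<Sum>i\<in>treated Z. w $ i) = 1" by (rule t1)
      show "(\<Sum>i\<in>control Z. w $ i) = 1" using b[of j0] e3 t1 by simp
      show "(\<Sum>i\<in>treated Z. w $ i *\<^sub>R X $ i) = (\<Sum>i\<in>control Z. w $ i *\<^sub>R X $ i)"
        using b by (simp only: vec_eq_iff) blast
    qed
  qed
qed

theorem mainTheorem3:
  fixes Z :: "real^('n::{finite,wellorder})"
    and X :: "real^('p::{finite,wellorder})^('n::{finite,wellorder})"
    and S :: "real^('n::{finite,wellorder})^('n::{finite,wellorder})"
    and v :: "'n::{finite,wellorder} \<Rightarrow> real^'n::{finite,wellorder}"
    and lam :: "'n::{finite,wellorder} \<Rightarrow> real"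
  assumes Z01: "\<forall>i. Z $ i = 0 \<or> Z $ i = 1"
    and treated_ne: "\<exists>i. Z $ i = 1"
    and control_ne: "\<exists>i. Z $ i = 0"
    and intercept: "\<forall>i. X $ i $ (LEAST j::'p. True) = 1"
    and S_sym: "transpose S = S"
    and S_pd: "\<forall>x. x \<noteq> 0 \<longrightarrow> x \<bullet> (S *v x) > 0"
    and v_orthonormal: "\<forall>k l. v k \<bullet> v l = (if k = l then 1 else 0)"
    and v_eigen: "\<forall>k. S *v v k = lam k *\<^sub>R v k"
    and lam_decr: "\<forall>k l. k \<le> l \<longrightarrow> lam l \<le> lam k"
    and lam_pos: "\<forall>k. lam k > 0"
    and XSX_inv: "invertible (transpose X ** matrix_inv S ** X)"
    and denom_nz: "Z \<bullet> (matrix_inv S *v ((mat 1 - X ** matrix_inv (transpose X ** matrix_inv S ** X)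
                     ** transpose X ** matrix_inv S) *v Z)) \<noteq> 0"
  shows "weight_feasible X Z (gls_weights S X Z) \<and>
         (\<forall>w. weight_feasible X Z w \<and> w \<noteq> gls_weights S X Z \<longrightarrow>
              weight_objective lam v Z (gls_weights S X Z) < weight_objective lam v Z w)"
proof -
  define Si where "Si = matrix_inv S"
  define G where "G = matrix_inv (transpose X ** Si ** X)"
  define j0 where "j0 = (LEAST j::'p. True)"
  have icpt: "\<forall>i. X $ i $ j0 = 1" using intercept by (simp add: j0_def)
  have injS: "inj ((*v) S)"
  proof (rule injI)
    fix x y assume "S *v x = S *v y"
    then have "S *v (x - y) = 0" by (simp add: matrix_vector_mult_diff_distrib)
    then show "x = y" using S_pd[rule_format, of "x - y"] by auto
  qed
  then have "invertible S" using matrix_left_invertible_injective invertible_left_inverse by blast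
  then have SSi: "S ** Si = mat 1" unfolding Si_def using inv_props by blast
  have GG: "(transpose X ** Si ** X) ** G = mat 1" unfolding G_def Si_def using inv_props XSX_inv by blast
  define a where "a = Si *v Z"
  define b where "b = G *v (transpose X *v a)"
  define u where "u = a - Si *v (X *v b)"
  define d where "d = Z \<bullet> u"
  have u_eq: "(mat 1 - Si ** X ** G ** transpose X) *v (Si *v Z) = u"
    unfolding u_def b_def a_def
    by (simp add: matrix_vector_mult_diff_rdistrib matrix_vector_mul_assoc[symmetric])
  have d_eq: "Z \<bullet> (Si *v ((mat 1 - X ** G ** transpose X ** Si) *v Z)) = d"
    unfolding d_def u_def b_def a_def
    by (simp add: matrix_vector_mult_diff_rdistrib matrix_vector_mult_diff_distrib matrix_vector_mul_assoc[symmetric])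
  have dnz: "d \<noteq> 0" using denom_nz d_eq unfolding Si_def G_def by simp
  have Xu: "transpose X *v u = 0"
  proof -
    have "transpose X *v (Si *v (X *v b)) = ((transpose X ** Si ** X) ** G) *v (transpose X *v a)"
      unfolding b_def by (simp only: matrix_vector_mul_assoc matrix_mul_assoc)
    then show ?thesis unfolding u_def using GG
      by (simp only: matrix_vector_mult_diff_distrib matrix_vector_mul_lid) simp
  qed
  have Su: "S *v u = Z - X *v b"
  proof -
    have "S *v a = Z" unfolding a_def by (simp add: matrix_vector_mul_assoc SSi)
    moreover have "S *v (Si *v (X *v b)) = X *v b" by (metis SSi matrix_vector_mul_assoc matrix_vector_mul_lid)
    ultimately show ?thesis unfolding u_def by (simp add: matrix_vector_mult_diff_distrib)
  qed
  define ust where "ust = (1 / d) *\<^sub>R u"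
  have gls: "gls_weights S X Z = flipv Z ust"
    unfolding gls_weights_def Let_def flipv_def ust_def
    by (simp add: Si_def[symmetric] G_def[symmetric] u_eq d_eq vec_eq_iff)
  have fg: "flipv Z (gls_weights S X Z) = ust" using gls flip_flip[OF Z01] by simp
  have Zust: "Z \<bullet> ust = 1" unfolding ust_def using dnz by (simp add: d_def[symmetric])
  have Xust: "transpose X *v ust = 0" unfolding ust_def using Xu by (simp add: matrix_vector_mult_scaleR)
  have feas: "weight_feasible X Z (gls_weights S X Z)"
    using feasible_iff[OF Z01 icpt] fg Zust Xust by simp
  have Sust: "S *v ust = (1/d) *\<^sub>R (Z - X *v b)" unfolding ust_def
    by (simp add: matrix_vector_mult_scaleR Su)
  show ?thesis
  proof (intro conjI allI impI)
    show "weight_feasible X Z (gls_weights S X Z)" by (rule feas)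
    fix w assume wa: "weight_feasible X Z w \<and> w \<noteq> gls_weights S X Z"
    define y where "y = flipv Z w"
    define h where "h = y - ust"
    have Zy: "Z \<bullet> y = 1" and Xy: "transpose X *v y = 0"
      using wa feasible_iff[OF Z01 icpt] unfolding y_def by auto
    have hnz: "h \<noteq> 0"
    proof
      assume "h = 0"
      then have "flipv Z w = flipv Z (gls_weights S X Z)" using fg unfolding h_def y_def by simp
      then show False using wa flip_inj[OF Z01] by blast
    qed
    have Zh: "Z \<bullet> h = 0" unfolding h_def using Zy Zust by (simp add: inner_diff_right)
    have Xh: "transpose X *v h = 0" unfolding h_def using Xy Xust
      by (simp only: matrix_vector_mult_diff_distrib) simp
    have Xbh: "h \<bullet> (X *v b) = 0"
    proof -
      have "h \<bullet> (X *v b) = (h v* X) \<bullet> b" by (simp add: dot_lmul_matrix)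
      also have "h v* X = transpose X *v h" by simp
      finally show ?thesis using Xh by simp
    qed
    have cross: "h \<bullet> (S *v ust) = 0"
      unfolding Sust using Zh Xbh by (simp add: inner_diff_right inner_commute)
    have cross2: "ust \<bullet> (S *v h) = 0"
    proof -
      have "ust \<bullet> (S *v h) = (ust v* S) \<bullet> h" by (simp add: dot_lmul_matrix)
      also have "ust v* S = transpose S *v ust" by simp
      finally show ?thesis using cross S_sym by (simp add: inner_commute)
    qed
    have pos: "h \<bullet> (S *v h) > 0" using S_pd hnz by blast
    have yeq: "y = ust + h" unfolding h_def by simp
    have "y \<bullet> (S *v y) = ust \<bullet> (S *v ust) + h \<bullet> (S *v h)"
      unfolding yeq using cross cross2
      by (simp add: matrix_vector_right_distrib inner_add_left inner_add_right)
    then have "ust \<bullet> (S *v ust) < y \<bullet> (S *v y)" using pos by simp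
    then show "weight_objective lam v Z (gls_weights S X Z) < weight_objective lam v Z w"
      unfolding objective_flip[OF Z01] fg y_def[symmetric]
      using spectral[OF v_orthonormal v_eigen] by simp
  qed
qed

end
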